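(* Let $\mu$ be a bounded continuous valuation on a topological space $X$, and let $\nu:\mathcal OX\to\mathbb R\cup\{-\infty,+\infty\}$ be a monotonic map with $\nu(\emptyset)=0$. If $\mu+\nu$ (defined pointwise) is a continuous valuation, then so is $\nu$.
   Context: A valuation on $X$ is a map $\mathcal OX\to[0,\infty]$ with value $0$ on $\emptyset$, monotone and modular; it is continuous if it preserves suprema of directed families of opens; bounded if its value on $X$ is finite. *)

theory Defs
  imports "HOL-Analysis.Analysis"
begin

text \<open>Maps on the open sets of a topological space X, valued in the extended reals.
  Only the values on open sets of X matter.\<close>

definition monotone_on_opens :: "'a topology \<Rightarrow> ('a set \<Rightarrow> ereal) \<Rightarrow> bool" where
  "monotone_on_opens X m \<longleftrightarrow>
     (\<forall>U V. openin X U \<and> openin X V \<and> U \<subseteq> V \<longrightarrow> m U \<le> m V)"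

definition valuation_on :: "'a topology \<Rightarrow> ('a set \<Rightarrow> ereal) \<Rightarrow> bool" where
  "valuation_on X m \<longleftrightarrow>
     (\<forall>U. openin X U \<longrightarrow> 0 \<le> m U) \<and>
     m {} = 0 \<and>
     monotone_on_opens X m \<and>
     (\<forall>U V. openin X U \<and> openin X V \<longrightarrow> m U + m V = m (U \<union> V) + m (U \<inter> V))"

definition directed_opens :: "'a topology \<Rightarrow> 'a set set \<Rightarrow> bool" where
  "directed_opens X D \<longleftrightarrow>
     D \<noteq> {} \<and> (\<forall>U\<in>D. openin X U) \<and> (\<forall>U\<in>D. \<forall>V\<in>D. \<exists>W\<in>D. U \<subseteq> W \<and> V \<subseteq> W)"

definition continuous_valuation_on :: "'a topology \<Rightarrow> ('a set \<Rightarrow> ereal) \<Rightarrow> bool" where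
  "continuous_valuation_on X m \<longleftrightarrow>
     valuation_on X m \<and>
     (\<forall>D. directed_opens X D \<longrightarrow> m (\<Union>D) = (SUP U\<in>D. m U))"

definition bounded_valuation_on :: "'a topology \<Rightarrow> ('a set \<Rightarrow> ereal) \<Rightarrow> bool" where
  "bounded_valuation_on X m \<longleftrightarrow> valuation_on X m \<and> m (topspace X) < \<infinity>"

end

theory Submission
  imports Defs
begin

theorem lemma3p5:
  fixes X :: "'a topology" and \<mu> \<nu> :: "'a set \<Rightarrow> ereal"
  assumes "continuous_valuation_on X \<mu>"
    and "bounded_valuation_on X \<mu>"
    and "monotone_on_opens X \<nu>"
    and "\<nu> {} = 0"
    and "continuous_valuation_on X (\<lambda>U. \<mu> U + \<nu> U)"
  shows "continuous_valuation_on X \<nu>"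
proof -
  have vm: "valuation_on X \<mu>" using assms(1) unfolding continuous_valuation_on_def by blast
  have vs: "valuation_on X (\<lambda>U. \<mu> U + \<nu> U)" using assms(5) unfolding continuous_valuation_on_def by blast
  have top: "\<mu> (topspace X) < \<infinity>" using assms(2) unfolding bounded_valuation_on_def by blast
  have mupos: "\<And>U. openin X U \<Longrightarrow> 0 \<le> \<mu> U" using vm unfolding valuation_on_def by blast
  have mumono: "\<And>U V. openin X U \<Longrightarrow> openin X V \<Longrightarrow> U \<subseteq> V \<Longrightarrow> \<mu> U \<le> \<mu> V"
    using vm unfolding valuation_on_def monotone_on_opens_def by blast
  have mufin: "\<And>U. openin X U \<Longrightarrow> \<bar>\<mu> U\<bar> \<noteq> \<infinity>"
  proof -
    fix U assume U: "openin X U"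
    have "\<mu> U \<le> \<mu> (topspace X)" by (rule mumono[OF U openin_topspace openin_subset[OF U]])
    then show "\<bar>\<mu> U\<bar> \<noteq> \<infinity>" using top mupos[OF U] by auto
  qed
  have nupos: "\<And>U. openin X U \<Longrightarrow> 0 \<le> \<nu> U"
    using assms(3,4) unfolding monotone_on_opens_def by (metis empty_subsetI openin_empty)
  have numono: "\<And>U V. openin X U \<Longrightarrow> openin X V \<Longrightarrow> U \<subseteq> V \<Longrightarrow> \<nu> U \<le> \<nu> V"
    using assms(3) unfolding monotone_on_opens_def by blast
  have modular: "\<nu> U + \<nu> V = \<nu> (U \<union> V) + \<nu> (U \<inter> V)" if U: "openin X U" and V: "openin X V" for U V
  proof -
    have e1: "\<mu> U + \<mu> V = \<mu> (U \<union> V) + \<mu> (U \<inter> V)" using vm U V unfolding valuation_on_def by blast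
    have e2: "(\<mu> U + \<nu> U) + (\<mu> V + \<nu> V) = (\<mu> (U \<union> V) + \<nu> (U \<union> V)) + (\<mu> (U \<inter> V) + \<nu> (U \<inter> V))"
      using vs U V unfolding valuation_on_def by blast
    have UV1: "openin X (U \<union> V)" "openin X (U \<inter> V)" using U V by auto
    obtain a where a: "\<mu> U = ereal a" using mufin[OF U] by (cases "\<mu> U") auto
    obtain b where b: "\<mu> V = ereal b" using mufin[OF V] by (cases "\<mu> V") auto
    obtain c where c: "\<mu> (U \<union> V) = ereal c" using mufin[OF UV1(1)] by (cases "\<mu> (U \<union> V)") auto
    obtain d where d: "\<mu> (U \<inter> V) = ereal d" using mufin[OF UV1(2)] by (cases "\<mu> (U \<inter> V)") auto
    have abcd: "a + b = c + d" using e1 a b c d by simp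
    have l: "ereal (a + b) + (\<nu> U + \<nu> V) = (\<mu> U + \<nu> U) + (\<mu> V + \<nu> V)"
      by (simp only: a b plus_ereal.simps(1)[symmetric] add_ac)
    have r: "ereal (c + d) + (\<nu> (U \<union> V) + \<nu> (U \<inter> V)) = (\<mu> (U \<union> V) + \<nu> (U \<union> V)) + (\<mu> (U \<inter> V) + \<nu> (U \<inter> V))"
      by (simp only: c d plus_ereal.simps(1)[symmetric] add_ac)
    have "ereal (a + b) + (\<nu> U + \<nu> V) = ereal (a+b) + (\<nu> (U \<union> V) + \<nu> (U \<inter> V))"
      using l r e2 abcd by simp
    then show ?thesis by (subst (asm) ereal_add_cancel_left) auto
  qed
  have val: "valuation_on X \<nu>"
    unfolding valuation_on_def using nupos assms(3,4) modular by blast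
  have cont: "\<nu> (\<Union>D) = (SUP U\<in>D. \<nu> U)" if D: "directed_opens X D" for D
  proof -
    have op: "\<And>U. U \<in> D \<Longrightarrow> openin X U" using D unfolding directed_opens_def by blast
    have opU: "openin X (\<Union>D)" using op by auto
    have h1: "(\<mu> (\<Union>D) + \<nu> (\<Union>D)) = (SUP U\<in>D. \<mu> U + \<nu> U)"
      using assms(5) D unfolding continuous_valuation_on_def by blast
    have h2: "\<mu> (\<Union>D) = (SUP U\<in>D. \<mu> U)"
      using assms(1) D unfolding continuous_valuation_on_def by blast
    have ge: "(SUP U\<in>D. \<nu> U) \<le> \<nu> (\<Union>D)"
      by (rule SUP_least) (use numono op opU in auto)
    have "(SUP U\<in>D. \<mu> U + \<nu> U) \<le> \<mu> (\<Union>D) + (SUP U\<in>D. \<nu> U)"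
      unfolding h2 by (rule SUP_least, rule add_mono) (auto intro: SUP_upper)
    then have "\<mu> (\<Union>D) + \<nu> (\<Union>D) \<le> \<mu> (\<Union>D) + (SUP U\<in>D. \<nu> U)" using h1 by simp
    moreover obtain r where r: "\<mu> (\<Union>D) = ereal r" using mufin[OF opU] by (cases "\<mu> (\<Union>D)") auto
    ultimately have "\<nu> (\<Union>D) \<le> (SUP U\<in>D. \<nu> U)" by (simp add: ereal_add_le_add_iff)
    then show ?thesis using ge by simp
  qed
  show ?thesis unfolding continuous_valuation_on_def using val cont by blast
qed

end
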